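(* Let $(X,T)$ be a minimal Cantor system which is topologically conjugate via $\varphi:X\to U$ to the induced system $(U,T_U)$, where $U\subsetneq X$ is clopen. Then $\lim_{n\to\infty}\sup_{\mu\in M(X,T)}\mu(\varphi^n(X))=0$. In particular, $\bigcap_{n\in\mathbb N}\varphi^n(X)$ has measure $0$ for every $T$-invariant Borel probability measure.
   Context: A minimal Cantor system is a pair $(X,T)$, $X$ a Cantor set, $T$ a homeomorphism with all orbits dense. For clopen $U$, $T_U(x)=T^{r_U(x)}x$ where $r_U(x)=\inf\{n>0:T^nx\in U\}$. $M(X,T)$ denotes the set of $T$-invariant Borel probability measures on $X$. *)

theory Defs
  imports "HOL-Probability.Probability"
begin

text \<open>A Cantor set: nonempty compact, perfect, totally disconnected subset of a metric space
  (Brouwer's characterisation; metrizability comes from the ambient metric space).\<close>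
definition cantor_set :: "'a::metric_space set \<Rightarrow> bool" where
  "cantor_set X \<longleftrightarrow> X \<noteq> {} \<and> compact X \<and> (\<forall>x\<in>X. x islimpt X)
     \<and> (\<forall>x\<in>X. connected_component_set X x = {x})"

definition minimal_cantor_system :: "'a::metric_space set \<Rightarrow> ('a \<Rightarrow> 'a) \<Rightarrow> bool" where
  "minimal_cantor_system X T \<longleftrightarrow> cantor_set X \<and>
     (\<exists>S. homeomorphism X X T S \<and>
        (\<forall>x\<in>X. X \<subseteq> closure ({(T ^^ n) x | n. True} \<union> {(S ^^ n) x | n. True})))"

definition clopen_in :: "'a::topological_space set \<Rightarrow> 'a set \<Rightarrow> bool" where
  "clopen_in X U \<longleftrightarrow> openin (top_of_set X) U \<and> closedin (top_of_set X) U"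

definition return_time :: "'a set \<Rightarrow> ('a \<Rightarrow> 'a) \<Rightarrow> 'a \<Rightarrow> nat" where
  "return_time U T x = (LEAST n. n > 0 \<and> (T ^^ n) x \<in> U)"

definition induced_map :: "'a set \<Rightarrow> ('a \<Rightarrow> 'a) \<Rightarrow> 'a \<Rightarrow> 'a" where
  "induced_map U T x = (T ^^ return_time U T x) x"

definition invariant_measures :: "'a::topological_space set \<Rightarrow> ('a \<Rightarrow> 'a) \<Rightarrow> 'a measure set" where
  "invariant_measures X T = {M. sets M = sets (restrict_space borel X) \<and> prob_space M \<and>
      T \<in> measurable M M \<and> (\<forall>A\<in>sets M. emeasure M (T -` A \<inter> space M) = emeasure M A)}"

end

theory Submission
  imports Defs
begin



lemma cc_link: "connected_component_of_set (top_of_set X) x = connected_component_set X x"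
  unfolding connected_component_of_def connected_component_def
  by (auto simp: connectedin_subtopology)

lemma zero_dim:
  fixes X :: "'a::metric_space set"
  assumes "compact X" "\<forall>x\<in>X. connected_component_set X x = {x}" "x \<in> X" "open G" "x \<in> G"
  shows "\<exists>C. C \<subseteq> G \<inter> X \<and> x \<in> C \<and> closed C \<and> closed (X - C)"
proof -
  have cc: "{x} \<in> connected_components_of (top_of_set X)"
  proof -
    have "connected_component_of_set (top_of_set X) x = {x}" using assms(2,3) cc_link[of X x] by simp
    then show ?thesis unfolding connected_components_of_def using assms(3)
      by (metis image_eqI topspace_euclidean_subtopology)
  qed
  have lc: "locally_compact_space (top_of_set X)"
    using assms(1) by (intro compact_imp_locally_compact_space compact_space_subtopology) simp
  have hs: "Hausdorff_space (top_of_set X)"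
    by (rule Hausdorff_space_subtopology) (rule Hausdorff_space_euclidean)
  obtain U V where UV: "openin (top_of_set X) U" "openin (top_of_set X) V" "disjnt U V" "U \<union> V = X" "{x} \<subseteq> U" "U \<subseteq> G \<inter> X"
  proof -
    have "openin (top_of_set X) (G \<inter> X)" using assms(4) by (metis Int_commute openin_open_Int)
    have "{x} \<subseteq> G \<inter> X" using assms by simp
    then show ?thesis using wilder_locally_compact_component_thm[OF lc hs cc _ \<open>openin (top_of_set X) (G \<inter> X)\<close>] that
      by (metis compactin_euclidean_iff compactin_subtopology compact_sing topspace_euclidean_subtopology empty_subsetI insert_subset assms(3))
  qed
  have cX: "closed X" using assms(1) compact_imp_closed by blast
  have "X - U = V" using UV unfolding disjnt_def by blast
  moreover have "X - V = U" using UV unfolding disjnt_def by blast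
  ultimately have "closedin (top_of_set X) U" "closedin (top_of_set X) V"
    using UV(1,2) unfolding closedin_def by (auto dest: openin_imp_subset)
  then have "closed U" "closed V" using closedin_closed_eq[OF cX] by auto
  then show ?thesis using UV \<open>X - U = V\<close> by (intro exI[of _ U]) auto
qed



definition clopens :: "'a::metric_space set \<Rightarrow> 'a set set" where
  "clopens X = {C. C \<subseteq> X \<and> closed C \<and> closed (X - C)}"

lemma open_countable_clopens:
  fixes X :: "'a::metric_space set"
  assumes X: "compact X" "\<forall>x\<in>X. connected_component_set X x = {x}" and G: "open G"
  shows "\<exists>D::nat \<Rightarrow> 'a set. (\<forall>m. D m \<in> clopens X) \<and> G \<inter> X = (\<Union>m. D m)"
proof (cases "X - G = {}")
  case True
  have cX: "closed X" using X(1) compact_imp_closed by blast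
  show ?thesis using True cX by (intro exI[of _ "\<lambda>m. X"]) (auto simp: clopens_def)
next
  case False
  have cX: "closed X" using X(1) compact_imp_closed by blast
  have cXG: "closed (X - G)" using cX G by (simp add: closed_Diff)
  have "\<forall>x\<in>G\<inter>X. \<exists>C. C \<subseteq> G \<inter> X \<and> x \<in> C \<and> closed C \<and> closed (X - C)"
    using zero_dim[OF X] G by blast
  then obtain C where C: "\<And>x. x \<in> G\<inter>X \<Longrightarrow> C x \<subseteq> G \<inter> X \<and> x \<in> C x \<and> closed (C x) \<and> closed (X - C x)"
    by metis
  define K where "K m = X \<inter> {x. inverse (real (Suc m)) \<le> infdist x (X - G)}" for m
  have KG: "K m \<subseteq> G \<inter> X" for m
  proof
    fix x assume "x \<in> K m"
    then have "x \<in> X" "inverse (real (Suc m)) \<le> infdist x (X - G)" by (auto simp: K_def)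
    moreover have "infdist x (X - G) = 0" if "x \<notin> G" using that \<open>x \<in> X\<close> by (simp add: infdist_zero)
    moreover have "0 < inverse (real (Suc m))" by simp
    ultimately show "x \<in> G \<inter> X" by (cases "x \<in> G") auto
  qed
  have Kc: "compact (K m)" for m
  proof -
    have "closed {x. inverse (real (Suc m)) \<le> infdist x (X - G)}"
      by (intro closed_Collect_le continuous_on_const continuous_on_infdist continuous_on_id)
    then show ?thesis unfolding K_def using X(1) by (simp add: compact_Int_closed)
  qed
  have "\<exists>J. finite J \<and> J \<subseteq> K m \<and> K m \<subseteq> (\<Union>x\<in>J. - (X - C x))" for m
  proof -
    have "K m \<subseteq> (\<Union>x\<in>K m. - (X - C x))" using C KG by blast
    moreover have "open (- (X - C x))" if "x \<in> K m" for x
    proof -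
      have "closed (X - C x)" using C[of x] KG that by blast
      then show ?thesis by (rule open_Compl)
    qed
    ultimately obtain J where "J \<subseteq> K m" "finite J" "K m \<subseteq> (\<Union>x\<in>J. - (X - C x))"
      using compactE_image[OF Kc, of "K m" "\<lambda>x. - (X - C x)"] by metis
    then show ?thesis by blast
  qed
  then obtain J where J: "\<And>m. finite (J m) \<and> J m \<subseteq> K m \<and> K m \<subseteq> (\<Union>x\<in>J m. - (X - C x))"
    by metis
  define D where "D m = (\<Union>x\<in>J m. C x)" for m
  have DG: "D m \<subseteq> G \<inter> X" for m using J C KG unfolding D_def by blast
  have KD: "K m \<subseteq> D m" for m
  proof
    fix y assume "y \<in> K m"
    then obtain x where "x \<in> J m" "y \<in> - (X - C x)" using J by blast
    moreover have "y \<in> X" using \<open>y \<in> K m\<close> by (simp add: K_def)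
    ultimately show "y \<in> D m" unfolding D_def by blast
  qed
  have Dc: "D m \<in> clopens X" for m
  proof -
    have "closed (D m)" unfolding D_def using J C KG by (intro closed_UN) blast+
    moreover have "X - D m = X \<inter> (\<Inter>x\<in>J m. X - C x)" unfolding D_def by blast
    moreover have "closed (X \<inter> (\<Inter>x\<in>J m. X - C x))" using J C KG cX by (intro closed_Int closed_INT) blast+
    ultimately show ?thesis using DG unfolding clopens_def by auto
  qed
  have GK: "G \<inter> X \<subseteq> (\<Union>m. K m)"
  proof
    fix x assume x: "x \<in> G \<inter> X"
    have "infdist x (X - G) \<noteq> 0" using in_closed_iff_infdist_zero[OF cXG False] x by auto
    then have "0 < infdist x (X - G)" using infdist_nonneg[of x "X - G"] by linarith
    then obtain n where "inverse (real (Suc n)) < infdist x (X - G)" using reals_Archimedean by blast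
    then have "inverse (real (Suc n)) \<le> infdist x (X - G)" by (rule less_imp_le)
    then have "x \<in> K n" using x unfolding K_def by blast
    then show "x \<in> (\<Union>m. K m)" by blast
  qed
  have KD2: "(\<Union>m. K m) \<subseteq> (\<Union>m. D m)" using KD by (meson UN_mono order_refl)
  have DG2: "(\<Union>m. D m) \<subseteq> G \<inter> X" using DG by (simp add: UN_least)
  have eq: "G \<inter> X = (\<Union>m. D m)" by (rule subset_antisym[OF order_trans[OF GK KD2] DG2])
  show ?thesis using Dc eq by metis
qed




lemma sigma_clopens:
  fixes X :: "'a::metric_space set"
  assumes X: "compact X" "\<forall>x\<in>X. connected_component_set X x = {x}"
  shows "sets (restrict_space borel X) = sigma_sets X (clopens X)"
proof
  have cX: "closed X" using X(1) compact_imp_closed by blast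
  have XB: "X \<inter> space borel \<in> sets borel" using cX by simp
  interpret sa: sigma_algebra X "sets (restrict_space borel X)"
    using sets.sigma_algebra_axioms[of "restrict_space borel X"] XB
    by (simp add: space_restrict_space)
  show "sigma_sets X (clopens X) \<subseteq> sets (restrict_space borel X)"
  proof (rule sa.sigma_sets_subset)
    show "clopens X \<subseteq> sets (restrict_space borel X)"
      unfolding clopens_def using sets_restrict_space_iff[OF XB] by auto
  qed
  have main: "X \<inter> B \<in> sigma_sets X (clopens X)" if "B \<in> sigma_sets UNIV {S. open S}" for B
    using that
  proof induction
    case (Basic a)
    then have "open a" by simp
    then obtain D :: "nat \<Rightarrow> 'a set" where D: "\<And>m. D m \<in> clopens X" "a \<inter> X = (\<Union>m. D m)"
      using open_countable_clopens[OF X] by blast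
    have "(\<Union>m. D m) \<in> sigma_sets X (clopens X)"
      by (rule sigma_sets.Union) (rule sigma_sets.Basic, rule D(1))
    then show ?case using D(2) by (simp add: Int_commute)
  next
    case Empty
    then show ?case by (simp add: sigma_sets.Empty)
  next
    case (Compl a)
    have "X \<inter> (UNIV - a) = X - (X \<inter> a)" by blast
    then show ?case using sigma_sets.Compl[OF Compl.IH] by simp
  next
    case (Union a)
    have "X \<inter> (\<Union>i. a i) = (\<Union>i. X \<inter> a i)" by blast
    then show ?case using sigma_sets.Union[of "\<lambda>i. X \<inter> a i", OF Union.IH] by simp
  qed
  show "sets (restrict_space borel X) \<subseteq> sigma_sets X (clopens X)"
  proof
    fix A assume "A \<in> sets (restrict_space borel X)"
    then obtain B where "B \<in> sets borel" "A = X \<inter> B" unfolding sets_restrict_space by blast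
    then show "A \<in> sigma_sets X (clopens X)" using main by (simp add: sets_borel)
  qed
qed




lemma cluster_point:
  fixes a :: "nat \<Rightarrow> 'b \<Rightarrow> real"
  assumes a01: "\<And>n i. a n i \<in> {0..1}"
  shows "\<exists>p. (\<forall>i. p i \<in> {0..1}) \<and>
     (\<forall>I e. finite I \<longrightarrow> e > 0 \<longrightarrow> (\<forall>N. \<exists>n\<ge>N. \<forall>i\<in>I. \<bar>a n i - p i\<bar> < e))"
proof -
  define K :: "('b \<Rightarrow> real) set" where "K = PiE UNIV (\<lambda>_. {0..1})"
  have "compactin (product_topology (\<lambda>_. euclidean) UNIV) K"
    unfolding K_def by (subst compactin_PiE) simp
  then have cK: "compact K" by (simp add: euclidean_product_topology)
  define F where "F = filtermap a sequentially"
  have Fb: "F \<noteq> bot" unfolding F_def by (simp add: filtermap_bot_iff)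
  have FK: "eventually (\<lambda>x. x \<in> K) F"
    unfolding F_def eventually_filtermap K_def PiE_UNIV_domain using a01 by simp
  obtain p where pK: "p \<in> K" and pF: "inf (nhds p) F \<noteq> bot"
    using cK[unfolded compact_filter] Fb FK by blast
  have "\<forall>N. \<exists>n\<ge>N. \<forall>i\<in>I. \<bar>a n i - p i\<bar> < e" if "finite I" "e > 0" for I e
  proof -
    define V where "V = {f. \<forall>i\<in>I. f (id i) \<in> ball (p i) e}"
    have oV: "open V" unfolding V_def by (rule product_topology_basis') (use that in auto)
    have pV: "p \<in> V" unfolding V_def using that by simp
    have "frequently (\<lambda>f. f \<in> V) F"
    proof (rule ccontr)
      assume "\<not> frequently (\<lambda>f. f \<in> V) F"
      then have ev: "eventually (\<lambda>f. f \<notin> V) F" by (simp add: not_frequently)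
      have "eventually (\<lambda>f. f \<in> V) (nhds p)" using oV pV by (rule eventually_nhds_in_open)
      then have "eventually (\<lambda>f. False) (inf (nhds p) F)"
        unfolding eventually_inf using ev by blast
      then show False using pF by (simp add: eventually_False)
    qed
    then have "\<forall>N. \<exists>n\<ge>N. a n \<in> V" unfolding F_def frequently_filtermap frequently_sequentially .
    then show ?thesis unfolding V_def by (simp add: dist_real_def abs_minus_commute)
  qed
  moreover have "\<forall>i. p i \<in> {0..1}" using pK unfolding K_def PiE_UNIV_domain by auto
  ultimately show ?thesis by blast
qed




lemma small_eq: fixes x y :: real assumes "\<And>e. e > 0 \<Longrightarrow> \<bar>x - y\<bar> < 3 * e" shows "x = y"
proof (rule ccontr)
  assume "x \<noteq> y"
  then have "\<bar>x - y\<bar> > 0" by simp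
  then have "\<bar>x - y\<bar> < 3 * (\<bar>x - y\<bar> / 3)" using assms[of "\<bar>x - y\<bar> / 3"] by simp
  then show False by simp
qed

lemma invariant_functional:
  fixes X :: "'a::metric_space set" and T :: "'a \<Rightarrow> 'a"
  assumes x0: "x0 \<in> X" and TX: "\<And>x. x \<in> X \<Longrightarrow> T x \<in> X"
  shows "\<exists>p :: 'a set \<Rightarrow> real. (\<forall>C. 0 \<le> p C \<and> p C \<le> 1) \<and> p X = 1 \<and>
     (\<forall>C D. C \<inter> D = {} \<longrightarrow> p (C \<union> D) = p C + p D) \<and>
     (\<forall>C. p (T -` C \<inter> X) = p C)"
proof -
  define a where "a n C = (\<Sum>k\<le>n. indicator C ((T^^k) x0)) / real (Suc n)" for n C
  have orb: "(T^^k) x0 \<in> X" for k by (induction k) (auto simp: x0 TX)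
  have a01: "a n C \<in> {0..1}" for n C
  proof -
    have "(\<Sum>k\<le>n. indicator C ((T^^k) x0) :: real) \<le> of_nat (card {..n}) * 1"
      by (rule sum_bounded_above) (simp add: indicator_def)
    moreover have "0 \<le> (\<Sum>k\<le>n. indicator C ((T^^k) x0) :: real)"
      by (rule sum_nonneg) simp
    ultimately show ?thesis unfolding a_def by simp
  qed
  obtain p where p01: "\<forall>C. p C \<in> {0..1}" and
    pc: "\<And>I e. finite I \<Longrightarrow> e > 0 \<Longrightarrow> \<forall>N. \<exists>n\<ge>N. \<forall>i\<in>I. \<bar>a n i - p i\<bar> < e"
    using cluster_point[of a, OF a01] by blast
  have aX: "a n X = 1" for n unfolding a_def using orb by (simp add: indicator_def)
  have pX: "p X = 1"
  proof (rule small_eq)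
    fix e :: real assume "e > 0"
    then obtain n where "\<bar>a n X - p X\<bar> < e" using pc[of "{X}" e] by auto
    then show "\<bar>p X - 1\<bar> < 3 * e" using aX[of n] \<open>e > 0\<close> by simp
  qed
  have add: "p (C \<union> D) = p C + p D" if "C \<inter> D = {}" for C D
  proof (rule small_eq)
    fix e :: real assume "e > 0"
    have aadd: "a n (C \<union> D) = a n C + a n D" for n
    proof -
      have "indicator (C \<union> D) y = (indicator C y + indicator D y :: real)" for y
        using that by (auto simp: indicator_def)
      then show ?thesis unfolding a_def by (simp add: sum.distrib add_divide_distrib)
    qed
    obtain n where "\<forall>i\<in>{C \<union> D, C, D}. \<bar>a n i - p i\<bar> < e" using pc[of "{C \<union> D, C, D}" e] \<open>e > 0\<close> by auto
    then show "\<bar>p (C \<union> D) - (p C + p D)\<bar> < 3 * e" using aadd[of n] by auto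
  qed
  have inv: "p (T -` C \<inter> X) = p C" for C
  proof (rule small_eq)
    fix e :: real assume "e > 0"
    obtain N :: nat where N: "inverse (real (Suc N)) < e" using reals_Archimedean \<open>e > 0\<close> by blast
    obtain n where n: "n \<ge> N" "\<forall>i\<in>{T -` C \<inter> X, C}. \<bar>a n i - p i\<bar> < e"
      using pc[of "{T -` C \<inter> X, C}" e] \<open>e > 0\<close> by blast
    define g where "g k = (indicator C ((T^^k) x0) :: real)" for k
    have "indicator (T -` C \<inter> X) ((T^^k) x0) = g (Suc k)" for k
      using orb[of k] by (simp add: g_def indicator_def)
    then have s1: "a n (T -` C \<inter> X) = (\<Sum>k\<le>n. g (Suc k)) / real (Suc n)" unfolding a_def by simp
    have s2: "a n C = (\<Sum>k\<le>n. g k) / real (Suc n)" unfolding a_def g_def by simp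
    have "(\<Sum>k\<le>n. g (Suc k)) - (\<Sum>k\<le>n. g k) = g (Suc n) - g 0"
      using sum.atMost_Suc_shift[of g n] sum.atMost_Suc[of g n] by simp
    moreover have "\<bar>g (Suc n) - g 0\<bar> \<le> 1" unfolding g_def by (simp add: indicator_def)
    ultimately have "\<bar>a n (T -` C \<inter> X) - a n C\<bar> \<le> 1 / real (Suc n)"
      unfolding s1 s2 by (simp add: diff_divide_distrib[symmetric] divide_right_mono)
    moreover have "1 / real (Suc n) \<le> inverse (real (Suc N))"
      using n(1) by (simp add: divide_inverse le_imp_inverse_le)
    ultimately show "\<bar>p (T -` C \<inter> X) - p C\<bar> < 3 * e" using n(2) N \<open>e > 0\<close> by auto
  qed
  show ?thesis using p01 pX add inv by (intro exI[of _ p]) auto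
qed




lemma clopens_algebra:
  assumes cX: "closed X"
  shows "algebra X (clopens X)"
  unfolding algebra_iff_Un
proof (intro conjI ballI)
  show "clopens X \<subseteq> Pow X" unfolding clopens_def by auto
  show "{} \<in> clopens X" unfolding clopens_def using cX by simp
  fix a assume a: "a \<in> clopens X"
  then show "X - a \<in> clopens X" unfolding clopens_def by (auto simp: Diff_Diff_Int inf.absorb2)
  fix b assume b: "b \<in> clopens X"
  have "X - (a \<union> b) = (X - a) \<inter> (X - b)" by blast
  then show "a \<union> b \<in> clopens X" using a b unfolding clopens_def by (auto intro: closed_Int closed_Un)
qed

lemma clopens_Int_stable: "Int_stable (clopens X)"
  unfolding Int_stable_def
proof (intro ballI)
  fix a b assume a: "a \<in> clopens X" and b: "b \<in> clopens X"
  have "X - (a \<inter> b) = (X - a) \<union> (X - b)" by blast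
  then show "a \<inter> b \<in> clopens X" using a b unfolding clopens_def by (auto intro: closed_Int closed_Un)
qed

lemma exists_invariant_measure:
  fixes X :: "'a::metric_space set" and T :: "'a \<Rightarrow> 'a"
  assumes X: "compact X" "\<forall>x\<in>X. connected_component_set X x = {x}" and Xne: "X \<noteq> {}"
    and cont: "continuous_on X T" and TX: "\<And>x. x \<in> X \<Longrightarrow> T x \<in> X"
  shows "\<exists>\<nu>. sets \<nu> = sets (restrict_space borel X) \<and> prob_space \<nu> \<and> T \<in> measurable \<nu> \<nu> \<and>
      (\<forall>A\<in>sets \<nu>. emeasure \<nu> (T -` A \<inter> space \<nu>) = emeasure \<nu> A)"
proof -
  obtain x0 where x0: "x0 \<in> X" using Xne by blast
  obtain p :: "'a set \<Rightarrow> real" where p01: "\<forall>C. 0 \<le> p C \<and> p C \<le> 1" and pX: "p X = 1"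
    and padd: "\<forall>C D. C \<inter> D = {} \<longrightarrow> p (C \<union> D) = p C + p D"
    and pinv: "\<forall>C. p (T -` C \<inter> X) = p C"
    using invariant_functional[of x0 X T, OF x0 TX] by blast
  have cX: "closed X" using X(1) compact_imp_closed by blast
  interpret alg: algebra X "clopens X" by (rule clopens_algebra[OF cX])
  define f where "f C = ennreal (p C)" for C
  have p0: "p {} = 0" using padd[rule_format, of "{}" "{}"] by simp
  have pos: "positive (clopens X) f" unfolding positive_def f_def using p0 by simp
  have addf: "additive (clopens X) f" unfolding additive_def f_def
  proof (intro ballI impI)
    fix x y :: "'a set" assume "x \<inter> y = {}"
    then show "ennreal (p (x \<union> y)) = ennreal (p x) + ennreal (p y)"
      using padd p01 by (simp add: ennreal_plus)
  qed
  have fin: "f A \<noteq> \<infinity>" for A unfolding f_def by simp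
  have contf: "(\<lambda>i. f (A i)) \<longlonglongrightarrow> 0"
    if A: "range A \<subseteq> clopens X" "decseq A" "(\<Inter>i. A i) = {}" for A
  proof -
    have "\<exists>i. A i = {}"
    proof (rule ccontr)
      assume ne: "\<not> (\<exists>i. A i = {})"
      have cA: "closed (A i)" for i using A(1) unfolding clopens_def by auto
      have "A 0 \<subseteq> X" using A(1) unfolding clopens_def by auto
      then have cA0: "compact (A 0)" using compact_Int_closed[OF X(1) cA[of 0]] by (simp add: inf.absorb2)
      have fipA: "A 0 \<inter> \<Inter>F' \<noteq> {}" if finF: "finite F'" "F' \<subseteq> range A" for F'
      proof -
        obtain J where J: "finite J" "F' = A ` J" using finite_subset_image[OF finF] by blast
        define m where "m = Max (insert 0 J)"
        have "A m \<subseteq> A 0 \<inter> \<Inter>F'"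
        proof -
          have "A m \<subseteq> A j" if "j \<in> insert 0 J" for j
            using A(2) J(1) that unfolding m_def by (simp add: decseqD)
          then show ?thesis using J(2) by blast
        qed
        then show ?thesis using ne by blast
      qed
      have "A 0 \<inter> \<Inter>(range A) \<noteq> {}"
        using compact_imp_fip[OF cA0, of "range A"] cA fipA by blast
      then show False using A(3) by blast
    qed
    then obtain i where "A i = {}" by blast
    then have "\<forall>j\<ge>i. A j = {}" using A(2) by (metis decseqD subset_empty)
    then have "eventually (\<lambda>j. f (A j) = 0) sequentially"
      unfolding eventually_sequentially f_def using p0 by (intro exI[of _ i]) simp
    then show ?thesis by (rule tendsto_eventually)
  qed
  obtain \<mu>0 where mu0: "\<forall>s\<in>clopens X. \<mu>0 s = f s" and ms: "measure_space X (sigma_sets X (clopens X)) \<mu>0"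
    using alg.caratheodory_empty_continuous[OF pos addf fin contf] by blast
  define \<Sigma> where "\<Sigma> = sigma_sets X (clopens X)"
  interpret sa: sigma_algebra X \<Sigma> using ms unfolding measure_space_def \<Sigma>_def by blast
  define \<nu> where "\<nu> = measure_of X \<Sigma> \<mu>0"
  have sets\<nu>: "sets \<nu> = \<Sigma>" and space\<nu>: "space \<nu> = X" unfolding \<nu>_def by simp_all
  have em: "emeasure \<nu> A = \<mu>0 A" if "A \<in> \<Sigma>" for A
  proof -
    have "sigma_algebra X \<Sigma>" "positive \<Sigma> \<mu>0" "countably_additive \<Sigma> \<mu>0"
      using ms unfolding measure_space_def \<Sigma>_def by auto
    then show ?thesis unfolding \<nu>_def using emeasure_measure_of_sigma that by blast
  qed
  have emC: "emeasure \<nu> C = ennreal (p C)" if "C \<in> clopens X" for C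
    using em[of C] mu0 that unfolding f_def \<Sigma>_def by auto
  have SL: "sets (restrict_space borel X) = \<Sigma>" unfolding \<Sigma>_def by (rule sigma_clopens[OF X])
  have XB: "X \<in> sets borel" using cX by simp
  have prob: "prob_space \<nu>"
  proof
    have "X \<in> clopens X" unfolding clopens_def using cX by simp
    then show "emeasure \<nu> (space \<nu>) = 1" using emC[of X] pX space\<nu> by simp
  qed
  have TmL: "T \<in> measurable (restrict_space borel X) (restrict_space borel X)"
  proof (rule measurable_restrict_space2)
    show "T \<in> space (restrict_space borel X) \<rightarrow> X" using TX by (simp add: space_restrict_space Pi_iff)
    show "T \<in> borel_measurable (restrict_space borel X)" by (rule borel_measurable_continuous_on_restrict[OF cont])
  qed
  have Tm: "T \<in> measurable \<nu> \<nu>"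
  proof -
    have se: "sets \<nu> = sets (restrict_space borel X)" using SL sets\<nu> by simp
    show ?thesis using TmL measurable_cong_sets[OF se se] by simp
  qed
  have pre: "T -` C \<inter> X \<in> clopens X" if "C \<in> clopens X" for C
  proof -
    have c1: "closed (T -` C \<inter> X)" using that cont cX unfolding clopens_def
      by (simp add: continuous_on_closed_vimage)
    have "X - (T -` C \<inter> X) = T -` (X - C) \<inter> X" using TX by blast
    moreover have "closed (T -` (X - C) \<inter> X)" using that cont cX unfolding clopens_def
      by (simp add: continuous_on_closed_vimage)
    ultimately show ?thesis using c1 unfolding clopens_def by auto
  qed
  have distr_eq: "\<nu> = distr \<nu> \<nu> T"
  proof (rule measure_eqI_generator_eq[where E="clopens X" and \<Omega>=X and A="\<lambda>i. X"])
    show "Int_stable (clopens X)" by (rule clopens_Int_stable)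
    show "clopens X \<subseteq> Pow X" unfolding clopens_def by auto
    show "sets \<nu> = sigma_sets X (clopens X)" using sets\<nu> \<Sigma>_def by simp
    show "sets (distr \<nu> \<nu> T) = sigma_sets X (clopens X)" using sets\<nu> \<Sigma>_def by simp
    show "range (\<lambda>i. X) \<subseteq> clopens X" unfolding clopens_def using cX by auto
    show "(\<Union>i. X) = X" by simp
    show "emeasure \<nu> X \<noteq> \<infinity>" using prob prob_space.emeasure_space_1 space\<nu> by fastforce
    fix C assume C: "C \<in> clopens X"
    have "C \<in> sets \<nu>" using C sets\<nu> \<Sigma>_def by auto
    then have "emeasure (distr \<nu> \<nu> T) C = emeasure \<nu> (T -` C \<inter> X)"
      using emeasure_distr[OF Tm] space\<nu> by simp
    also have "\<dots> = ennreal (p C)" using emC[OF pre[OF C]] pinv by simp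
    finally show "emeasure \<nu> C = emeasure (distr \<nu> \<nu> T) C" using emC[OF C] by simp
  qed
  have invA: "\<forall>A\<in>sets \<nu>. emeasure \<nu> (T -` A \<inter> space \<nu>) = emeasure \<nu> A"
  proof
    fix A assume "A \<in> sets \<nu>"
    then have "emeasure (distr \<nu> \<nu> T) A = emeasure \<nu> (T -` A \<inter> space \<nu>)"
      using emeasure_distr[OF Tm] by simp
    then show "emeasure \<nu> (T -` A \<inter> space \<nu>) = emeasure \<nu> A" using distr_eq by simp
  qed
  have se: "sets \<nu> = sets (restrict_space borel X)" using SL sets\<nu> by simp
  show ?thesis by (rule exI[of _ \<nu>]) (intro conjI se prob Tm invA)
qed




locale sys =
  fixes X U :: "'a::metric_space set" and T S \<phi> \<psi> :: "'a \<Rightarrow> 'a"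
  assumes cantor: "cantor_set X"
    and hT: "homeomorphism X X T S"
    and dense: "\<forall>x\<in>X. X \<subseteq> closure ({(T ^^ n) x | n. True} \<union> {(S ^^ n) x | n. True})"
    and clo: "clopen_in X U" and sub: "U \<subset> X"
    and hphi: "homeomorphism X U \<phi> \<psi>"
    and conj: "\<forall>x\<in>X. \<phi> (T x) = induced_map U T (\<phi> x)"
begin

abbreviation "L \<equiv> restrict_space borel X"
abbreviation "M \<equiv> invariant_measures X T"

lemma cX: "compact X" and clX: "closed X" and Xne: "X \<noteq> {}"
  and zd: "\<forall>x\<in>X. connected_component_set X x = {x}"
  using cantor unfolding cantor_set_def by (auto intro: compact_imp_closed)

lemma TX: "x \<in> X \<Longrightarrow> T x \<in> X" and SX: "x \<in> X \<Longrightarrow> S x \<in> X"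
  and ST: "x \<in> X \<Longrightarrow> S (T x) = x" and TS: "x \<in> X \<Longrightarrow> T (S x) = x"
  and contT: "continuous_on X T" and contS: "continuous_on X S"
  using hT unfolding homeomorphism_def by auto

lemma phiU: "x \<in> X \<Longrightarrow> \<phi> x \<in> U" and psiX: "u \<in> U \<Longrightarrow> \<psi> u \<in> X"
  and psiphi: "x \<in> X \<Longrightarrow> \<psi> (\<phi> x) = x" and phipsi: "u \<in> U \<Longrightarrow> \<phi> (\<psi> u) = u"
  and contphi: "continuous_on X \<phi>" and contpsi: "continuous_on U \<psi>" and phiX: "\<phi> ` X = U"
  using hphi unfolding homeomorphism_def by auto

lemma UX: "U \<subseteq> X" using sub by auto

lemma clU: "closed U"
  using clo clX unfolding clopen_in_def by (simp add: closedin_closed_eq)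

lemma XB: "X \<in> sets borel" using clX by simp
lemma spaceL: "space L = X" using XB by simp

lemma UL: "U \<in> sets L" using clU UX sets_restrict_space_iff[of X borel U] XB by simp

lemma TnX: "x \<in> X \<Longrightarrow> (T^^n) x \<in> X" by (induction n) (auto simp: TX)
lemma SnX: "x \<in> X \<Longrightarrow> (S^^n) x \<in> X" by (induction n) (auto simp: SX)
lemma SnTn: "x \<in> X \<Longrightarrow> (S^^n) ((T^^n) x) = x"
proof (induction n arbitrary: x)
  case (Suc n)
  have "(S^^Suc n) ((T^^Suc n) x) = (S^^n) (S (T ((T^^n) x)))" unfolding funpow_Suc_right[of n S] by simp
  also have "\<dots> = x" using Suc by (simp add: ST TnX)
  finally show ?case .
qed simp
lemma TnSn: "x \<in> X \<Longrightarrow> (T^^n) ((S^^n) x) = x"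
proof (induction n arbitrary: x)
  case (Suc n)
  have "(T^^Suc n) ((S^^Suc n) x) = (T^^n) (T (S ((S^^n) x)))" unfolding funpow_Suc_right[of n T] by simp
  also have "\<dots> = x" using Suc by (simp add: TS SnX)
  finally show ?case .
qed simp

lemma contTn: "continuous_on X (T^^n)"
proof (induction n)
  case 0 then show ?case by (simp add: continuous_on_id)
next
  case (Suc n)
  have "continuous_on ((T^^n) ` X) T" using contT by (rule continuous_on_subset) (auto simp: TnX)
  then have "continuous_on X (T \<circ> (T^^n))" by (rule continuous_on_compose[OF Suc.IH])
  then show ?case by simp
qed

lemma contSn: "continuous_on X (S^^n)"
proof (induction n)
  case 0 then show ?case by (simp add: continuous_on_id)
next
  case (Suc n)
  have "continuous_on ((S^^n) ` X) S" using contS by (rule continuous_on_subset) (auto simp: SnX)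
  then have "continuous_on X (S \<circ> (S^^n))" by (rule continuous_on_compose[OF Suc.IH])
  then show ?case by simp
qed

lemma meas_cont_L:
  assumes "continuous_on X f" "\<And>x. x \<in> X \<Longrightarrow> f x \<in> X"
  shows "f \<in> measurable L L"
proof (rule measurable_restrict_space2)
  show "f \<in> space L \<rightarrow> X" using assms(2) by (simp add: spaceL Pi_iff)
  show "f \<in> borel_measurable L" by (rule borel_measurable_continuous_on_restrict[OF assms(1)])
qed

context fixes \<mu> assumes mu: "\<mu> \<in> M"
begin

lemma setsmu: "sets \<mu> = sets L" and spacemu: "space \<mu> = X" and probmu: "prob_space \<mu>"
  and Tm: "T \<in> measurable \<mu> \<mu>"
  and invmu: "\<And>A. A \<in> sets \<mu> \<Longrightarrow> emeasure \<mu> (T -` A \<inter> X) = emeasure \<mu> A"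
proof -
  show se: "sets \<mu> = sets L" using mu unfolding invariant_measures_def by auto
  show sp: "space \<mu> = X" using sets_eq_imp_space_eq[OF se] spaceL by simp
  show "prob_space \<mu>" "T \<in> measurable \<mu> \<mu>" using mu unfolding invariant_measures_def by auto
  show "\<And>A. A \<in> sets \<mu> \<Longrightarrow> emeasure \<mu> (T -` A \<inter> X) = emeasure \<mu> A"
    using mu sp unfolding invariant_measures_def by auto
qed

lemma measL: "f \<in> measurable L L \<Longrightarrow> f \<in> measurable \<mu> \<mu>"
  using measurable_cong_sets[OF setsmu setsmu] by simp

lemma Tnm: "(T^^n) \<in> measurable \<mu> \<mu>"
  by (rule measL, rule meas_cont_L[OF contTn TnX])
lemma Snm: "(S^^n) \<in> measurable \<mu> \<mu>"
  by (rule measL, rule meas_cont_L[OF contSn SnX])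

lemma pre_sets: "f \<in> measurable \<mu> \<mu> \<Longrightarrow> A \<in> sets \<mu> \<Longrightarrow> f -` A \<inter> X \<in> sets \<mu>"
  using measurable_sets[of f \<mu> \<mu> A] spacemu by simp

lemma invTn: "A \<in> sets \<mu> \<Longrightarrow> emeasure \<mu> ((T^^n) -` A \<inter> X) = emeasure \<mu> A"
proof (induction n)
  case 0
  then show ?case using sets.sets_into_space[of A \<mu>] spacemu by (simp add: Int_absorb2)
next
  case (Suc n)
  have eq: "(T^^Suc n) -` A \<inter> X = T -` ((T^^n) -` A \<inter> X) \<inter> X"
    using TX unfolding funpow_Suc_right[of n T] by auto
  have "emeasure \<mu> ((T^^Suc n) -` A \<inter> X) = emeasure \<mu> (T -` ((T^^n) -` A \<inter> X) \<inter> X)"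
    by (simp only: eq)
  also have "\<dots> = emeasure \<mu> ((T^^n) -` A \<inter> X)" by (rule invmu[OF pre_sets[OF Tnm Suc.prems]])
  also have "\<dots> = emeasure \<mu> A" by (rule Suc.IH[OF Suc.prems])
  finally show ?case .
qed

lemma invSn: "A \<in> sets \<mu> \<Longrightarrow> emeasure \<mu> ((S^^n) -` A \<inter> X) = emeasure \<mu> A"
proof -
  assume A: "A \<in> sets \<mu>"
  define E where "E = (S^^n) -` A \<inter> X"
  have E: "E \<in> sets \<mu>" unfolding E_def by (rule pre_sets[OF Snm A])
  have AX: "A \<subseteq> X" using sets.sets_into_space[OF A] spacemu by simp
  have eq: "(T^^n) -` E \<inter> X = A"
    using AX unfolding E_def by (auto simp: SnTn TnX)
  have "emeasure \<mu> A = emeasure \<mu> ((T^^n) -` E \<inter> X)" by (simp only: eq)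
  also have "\<dots> = emeasure \<mu> E" by (rule invTn[OF E])
  finally show ?thesis unfolding E_def by simp
qed

end

end




context sys begin

lemma orbit_hits:
  assumes x: "x \<in> X"
  shows "\<exists>n. (T^^n) x \<in> X - U \<or> (S^^n) x \<in> X - U"
proof -
  obtain w where w: "w \<in> X - U" using sub by blast
  have oG: "open (- U)" using clU by (simp add: open_Compl)
  define Orb where "Orb = {(T ^^ n) x | n. True} \<union> {(S ^^ n) x | n. True}"
  have "w \<in> closure Orb" using dense x w unfolding Orb_def by blast
  then have "- U \<inter> closure Orb \<noteq> {}" using w by blast
  then have "- U \<inter> Orb \<noteq> {}" using open_Int_closure_eq_empty[OF oG] by blast
  then obtain y where y: "y \<in> Orb" "y \<notin> U" by blast
  then obtain n where "y = (T^^n) x \<or> y = (S^^n) x" unfolding Orb_def by blast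
  then show ?thesis using y(2) TnX[OF x, of n] SnX[OF x, of n] by blast
qed

lemma uniform_bound: "\<exists>q::real. 0 \<le> q \<and> q < 1 \<and> (\<forall>\<mu>\<in>M. measure \<mu> U \<le> q)"
proof -
  define W where "W = X - U"
  have oG: "open (- U)" using clU by (simp add: open_Compl)
  have "\<exists>G. open G \<and> G \<inter> X = (T^^n) -` (- U) \<inter> X" for n
    using contTn[of n] oG unfolding continuous_on_open_invariant by blast
  then obtain OT where OT: "\<And>n. open (OT n) \<and> OT n \<inter> X = (T^^n) -` (- U) \<inter> X" by metis
  have "\<exists>G. open G \<and> G \<inter> X = (S^^n) -` (- U) \<inter> X" for n
    using contSn[of n] oG unfolding continuous_on_open_invariant by blast
  then obtain OS where OS: "\<And>n. open (OS n) \<and> OS n \<inter> X = (S^^n) -` (- U) \<inter> X" by metis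
  define f where "f j = (if snd j then OT (fst j) else OS (fst j))" for j :: "nat \<times> bool"
  define g where "g j = (if snd j then (T^^(fst j)) -` W \<inter> X else (S^^(fst j)) -` W \<inter> X)" for j :: "nat \<times> bool"
  have cov: "X \<subseteq> (\<Union>j\<in>UNIV. f j)"
  proof
    fix x assume x: "x \<in> X"
    obtain n where "(T^^n) x \<in> X - U \<or> (S^^n) x \<in> X - U" using orbit_hits[OF x] by blast
    then show "x \<in> (\<Union>j\<in>UNIV. f j)"
    proof
      assume "(T^^n) x \<in> X - U"
      then have "x \<in> f (n, True)" using OT[of n] x unfolding f_def by auto
      then show ?thesis by blast
    next
      assume "(S^^n) x \<in> X - U"
      then have "x \<in> f (n, False)" using OS[of n] x unfolding f_def by auto
      then show ?thesis by blast
    qed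
  qed
  have of: "open (f j)" for j unfolding f_def using OT OS by auto
  have of': "\<And>j. j \<in> UNIV \<Longrightarrow> open (f j)" using of by simp
  obtain J where J0: "J \<subseteq> UNIV" and J: "finite J" "X \<subseteq> (\<Union>j\<in>J. f j)"
    by (rule compactE_image[OF cX, of UNIV f, OF of' cov])
  have XJ: "X \<subseteq> (\<Union>j\<in>J. g j)"
  proof
    fix x assume x: "x \<in> X"
    then obtain j where j: "j \<in> J" "x \<in> f j" using J by blast
    have "x \<in> g j"
    proof (cases "snd j")
      case True
      then show ?thesis using j x OT[of "fst j"] TnX[OF x, of "fst j"] unfolding f_def g_def W_def by auto
    next
      case False
      then show ?thesis using j x OS[of "fst j"] SnX[OF x, of "fst j"] unfolding f_def g_def W_def by auto
    qed
    then show "x \<in> (\<Union>j\<in>J. g j)" using j by blast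
  qed
  define K where "K = real (card J)"
  have bound: "measure \<mu> U \<le> 1 - 1 / K" and K1: "1 \<le> K" if mu: "\<mu> \<in> M" for \<mu>
  proof -
    interpret prob_space \<mu> using probmu[OF mu] .
    have Xs: "X \<in> sets \<mu>" using sets.top[of \<mu>] spacemu[OF mu] by simp
    have Us: "U \<in> sets \<mu>" using setsmu[OF mu] UL by simp
    have WL: "W \<in> sets \<mu>" unfolding W_def using Xs Us by (rule sets.Diff)
    have gs: "g j \<in> sets \<mu>" for j unfolding g_def using pre_sets[OF mu Tnm[OF mu] WL] pre_sets[OF mu Snm[OF mu] WL] by auto
    have gm: "measure \<mu> (g j) = measure \<mu> W" for j
      unfolding g_def measure_def using invTn[OF mu WL] invSn[OF mu WL] by auto
    have "1 = measure \<mu> X" using prob_space spacemu[OF mu] by simp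
    also have "\<dots> \<le> measure \<mu> (\<Union>j\<in>J. g j)"
      using XJ gs J(1) by (intro finite_measure_mono) auto
    also have "\<dots> \<le> (\<Sum>j\<in>J. measure \<mu> (g j))"
      using gs J(1) by (intro finite_measure_subadditive_finite) auto
    also have "\<dots> = K * measure \<mu> W" unfolding K_def using gm by simp
    finally have 1: "1 \<le> K * measure \<mu> W" .
    have W1: "measure \<mu> W \<le> 1" by (rule prob_le_1)
    have K0: "0 \<le> K" unfolding K_def by simp
    show "1 \<le> K" using 1 mult_left_mono[OF W1 K0] by simp
    have "measure \<mu> W = 1 - measure \<mu> U"
      using prob_compl[OF Us] spacemu[OF mu] unfolding W_def by simp
    moreover have "1 / K \<le> measure \<mu> W" using 1 \<open>1 \<le> K\<close> by (simp add: divide_le_eq mult.commute)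
    ultimately show "measure \<mu> U \<le> 1 - 1 / K" by simp
  qed
  show ?thesis
  proof (cases "M = {}")
    case True then show ?thesis by (intro exI[of _ 0]) simp
  next
    case False
    then obtain \<mu> where "\<mu> \<in> M" by blast
    then have "1 \<le> K" by (rule K1)
    then show ?thesis using bound by (intro exI[of _ "1 - 1/K"]) auto
  qed
qed

end




context sys begin

abbreviation "TU \<equiv> induced_map U T"
abbreviation "rt \<equiv> return_time U T"

lemma TU_eq: "u \<in> U \<Longrightarrow> TU u = \<phi> (T (\<psi> u))"
  using conj psiX phipsi by metis

lemma TU_U: "u \<in> U \<Longrightarrow> TU u \<in> U"
  using TU_eq phiU TX psiX by simp

lemma TU_inj: "u \<in> U \<Longrightarrow> v \<in> U \<Longrightarrow> TU u = TU v \<Longrightarrow> u = v"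
proof -
  assume u: "u \<in> U" and v: "v \<in> U" and e: "TU u = TU v"
  then have "\<phi> (T (\<psi> u)) = \<phi> (T (\<psi> v))" using TU_eq by simp
  then have "\<psi> (\<phi> (T (\<psi> u))) = \<psi> (\<phi> (T (\<psi> v)))" by simp
  then have "T (\<psi> u) = T (\<psi> v)" using psiphi TX psiX u v by simp
  then have "S (T (\<psi> u)) = S (T (\<psi> v))" by simp
  then have "\<psi> u = \<psi> v" using ST psiX u v by simp
  then have "\<phi> (\<psi> u) = \<phi> (\<psi> v)" by simp
  then show "u = v" using phipsi u v by simp
qed

lemma TU_surj: "y \<in> U \<Longrightarrow> \<exists>u\<in>U. TU u = y"
proof -
  assume y: "y \<in> U"
  define u where "u = \<phi> (S (\<psi> y))"
  have u: "u \<in> U" unfolding u_def using phiU SX psiX y by simp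
  have "TU u = \<phi> (T (\<psi> u))" using TU_eq u by simp
  also have "\<dots> = \<phi> (T (S (\<psi> y)))" unfolding u_def using psiphi SX psiX y by simp
  also have "\<dots> = y" using TS psiX phipsi y by simp
  finally show ?thesis using u by blast
qed

lemma TU_pow: "TU u = (T^^(rt u)) u" unfolding induced_map_def ..

context fixes \<mu> assumes mu: "\<mu> \<in> M"
begin

lemma Us: "U \<in> sets \<mu>" using setsmu[OF mu] UL by simp

lemma rt_meas: "rt \<in> measurable \<mu> (count_space UNIV)"
proof -
  have eq: "rt = (\<lambda>x. LEAST n. 0 < n \<and> (T^^n) x \<in> U)" by (rule ext) (simp add: return_time_def)
  have "(\<lambda>x. 0 < i \<and> (T^^i) x \<in> U) \<in> measurable \<mu> (count_space UNIV)" for i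
  proof -
    have "{x \<in> space \<mu>. 0 < i \<and> (T^^i) x \<in> U} = (if 0 < i then (T^^i) -` U \<inter> X else {})"
      using spacemu[OF mu] by auto
    moreover have "(T^^i) -` U \<inter> X \<in> sets \<mu>" by (rule pre_sets[OF mu Tnm[OF mu] Us])
    ultimately have "{x \<in> space \<mu>. 0 < i \<and> (T^^i) x \<in> U} \<in> sets \<mu>" by simp
    then show ?thesis unfolding pred_def[symmetric] .
  qed
  then show ?thesis unfolding eq by (rule measurable_Least)
qed

lemma TU_inv:
  assumes B: "B \<in> sets \<mu>" "B \<subseteq> U"
  shows "emeasure \<mu> {u\<in>U. TU u \<in> B} = emeasure \<mu> B"
proof -
  define P where "P k = U \<inter> (rt -` {k} \<inter> X) \<inter> ((T^^k) -` B \<inter> X)" for k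
  define Q where "Q k = (S^^k) -` P k \<inter> X" for k
  have Ps: "P k \<in> sets \<mu>" for k
  proof -
    have "rt -` {k} \<inter> X \<in> sets \<mu>" using measurable_sets[OF rt_meas, of "{k}"] spacemu[OF mu] by simp
    moreover have "(T^^k) -` B \<inter> X \<in> sets \<mu>" by (rule pre_sets[OF mu Tnm[OF mu] B(1)])
    ultimately show ?thesis unfolding P_def using Us by blast
  qed
  have Qs: "Q k \<in> sets \<mu>" for k unfolding Q_def by (rule pre_sets[OF mu Snm[OF mu] Ps])
  have PQ: "emeasure \<mu> (Q k) = emeasure \<mu> (P k)" for k unfolding Q_def by (rule invSn[OF mu Ps])
  have Pdisj: "disjoint_family P" unfolding disjoint_family_on_def P_def by auto
  have Punion: "{u\<in>U. TU u \<in> B} = (\<Union>k. P k)"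
  proof
    show "{u\<in>U. TU u \<in> B} \<subseteq> (\<Union>k. P k)"
    proof
      fix u assume u: "u \<in> {u\<in>U. TU u \<in> B}"
      then have "u \<in> P (rt u)" unfolding P_def using UX TU_pow[of u] by auto
      then show "u \<in> (\<Union>k. P k)" by blast
    qed
    show "(\<Union>k. P k) \<subseteq> {u\<in>U. TU u \<in> B}"
    proof
      fix u assume "u \<in> (\<Union>k. P k)"
      then obtain k where "u \<in> P k" by blast
      then show "u \<in> {u\<in>U. TU u \<in> B}" unfolding P_def using TU_pow[of u] by auto
    qed
  qed
  have Qdisj: "disjoint_family Q"
    unfolding disjoint_family_on_def
  proof (intro ballI impI)
    fix k j :: nat assume "k \<noteq> j"
    show "Q k \<inter> Q j = {}"
    proof (rule ccontr)
      assume "Q k \<inter> Q j \<noteq> {}"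
      then obtain y where y: "y \<in> Q k" "y \<in> Q j" by blast
      define u where "u = (S^^k) y"
      define v where "v = (S^^j) y"
      have yX: "y \<in> X" using y unfolding Q_def by auto
      have u: "u \<in> U" "rt u = k" using y unfolding Q_def P_def u_def by auto
      have v: "v \<in> U" "rt v = j" using y unfolding Q_def P_def v_def by auto
      have "TU u = y" using TU_pow[of u] u TnSn[OF yX] unfolding u_def by simp
      moreover have "TU v = y" using TU_pow[of v] v TnSn[OF yX] unfolding v_def by simp
      ultimately have "u = v" using TU_inj u v by simp
      then show False using u v \<open>k \<noteq> j\<close> by simp
    qed
  qed
  have Qunion: "B = (\<Union>k. Q k)"
  proof
    show "B \<subseteq> (\<Union>k. Q k)"
    proof
      fix y assume yB: "y \<in> B"
      then have yU: "y \<in> U" using B(2) by blast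
      then obtain u where u: "u \<in> U" "TU u = y" using TU_surj by blast
      define k where "k = rt u"
      have uX: "u \<in> X" using u UX by blast
      have yk: "y = (T^^k) u" using TU_pow[of u] u unfolding k_def by simp
      have Sy: "(S^^k) y = u" using yk SnTn[OF uX] by simp
      have "y \<in> X" using yU UX by blast
      then have "y \<in> Q k" unfolding Q_def P_def using Sy u uX yB k_def TnSn[OF \<open>y \<in> X\<close>, of k] by auto
      then show "y \<in> (\<Union>k. Q k)" by blast
    qed
    show "(\<Union>k. Q k) \<subseteq> B"
    proof
      fix y assume "y \<in> (\<Union>k. Q k)"
      then obtain k where "y \<in> Q k" by blast
      then have "y \<in> X" "(T^^k) ((S^^k) y) \<in> B" unfolding Q_def P_def by auto
      then show "y \<in> B" using TnSn by simp
    qed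
  qed
  have "emeasure \<mu> {u\<in>U. TU u \<in> B} = (\<Sum>k. emeasure \<mu> (P k))"
  proof -
    have "range P \<subseteq> sets \<mu>" using Ps by auto
    then show ?thesis unfolding Punion using suminf_emeasure[OF _ Pdisj] by simp
  qed
  also have "\<dots> = (\<Sum>k. emeasure \<mu> (Q k))" using PQ by simp
  also have "\<dots> = emeasure \<mu> (\<Union>k. Q k)" 
  proof -
    have "range Q \<subseteq> sets \<mu>" using Qs by auto
    then show ?thesis using suminf_emeasure[OF _ Qdisj] by simp
  qed
  also have "\<dots> = emeasure \<mu> B" using Qunion by simp
  finally show ?thesis .
qed

end

end




context sys begin

lemma psi'_meas:
  assumes x0: "x0 \<in> X"
  shows "(\<lambda>x. if x \<in> U then \<psi> x else x0) \<in> measurable L L"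
proof -
  have UsL: "U \<inter> space L \<in> sets L" using UL spaceL UX by (simp add: Int_absorb2)
  have x0L: "x0 \<in> space L" using x0 spaceL by simp
  have UB: "U \<in> sets borel" using clU by simp
  have rr: "restrict_space L U = restrict_space borel U"
    using restrict_restrict_space[of X borel U] XB UB UX by (simp add: Int_absorb1)
  have "\<psi> \<in> measurable (restrict_space borel U) L"
  proof (rule measurable_restrict_space2)
    show "\<psi> \<in> space (restrict_space borel U) \<rightarrow> X" using psiX by (simp add: space_restrict_space Pi_iff)
    show "\<psi> \<in> borel_measurable (restrict_space borel U)" by (rule borel_measurable_continuous_on_restrict[OF contpsi])
  qed
  then have "\<psi> \<in> measurable (restrict_space L U) L" using rr by simp
  then show ?thesis using measurable_restrict_space_iff[OF UsL x0L] by simp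
qed

lemma phi_image_eq:
  assumes "A \<subseteq> X"
  shows "U \<inter> ((\<lambda>x. if x \<in> U then \<psi> x else x0) -` A \<inter> X) = \<phi> ` A"
proof
  show "U \<inter> ((\<lambda>x. if x \<in> U then \<psi> x else x0) -` A \<inter> X) \<subseteq> \<phi> ` A"
  proof
    fix u assume u: "u \<in> U \<inter> ((\<lambda>x. if x \<in> U then \<psi> x else x0) -` A \<inter> X)"
    then have "\<psi> u \<in> A" "u = \<phi> (\<psi> u)" using phipsi by auto
    then show "u \<in> \<phi> ` A" by (metis imageI)
  qed
  show "\<phi> ` A \<subseteq> U \<inter> ((\<lambda>x. if x \<in> U then \<psi> x else x0) -` A \<inter> X)"
  proof
    fix u assume "u \<in> \<phi> ` A"
    then obtain a where a: "a \<in> A" "u = \<phi> a" by blast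
    then have aX: "a \<in> X" using assms by blast
    then have "u \<in> U" "\<psi> u = a" using a phiU psiphi by auto
    then show "u \<in> U \<inter> ((\<lambda>x. if x \<in> U then \<psi> x else x0) -` A \<inter> X)" using a UX by auto
  qed
qed

lemma phi_T_eq:
  assumes "A \<subseteq> X"
  shows "\<phi> ` (T -` A \<inter> X) = {u\<in>U. TU u \<in> \<phi> ` A}"
proof
  show "\<phi> ` (T -` A \<inter> X) \<subseteq> {u\<in>U. TU u \<in> \<phi> ` A}"
  proof
    fix u assume "u \<in> \<phi> ` (T -` A \<inter> X)"
    then obtain x where x: "x \<in> X" "T x \<in> A" "u = \<phi> x" by blast
    then have "TU u = \<phi> (T x)" using conj by simp
    then show "u \<in> {u\<in>U. TU u \<in> \<phi> ` A}" using x phiU by auto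
  qed
  show "{u\<in>U. TU u \<in> \<phi> ` A} \<subseteq> \<phi> ` (T -` A \<inter> X)"
  proof
    fix u assume "u \<in> {u\<in>U. TU u \<in> \<phi> ` A}"
    then obtain a where u: "u \<in> U" and a: "a \<in> A" "TU u = \<phi> a" by blast
    have aX: "a \<in> X" using a assms by blast
    have "\<phi> (T (\<psi> u)) = \<phi> a" using TU_eq u a by simp
    then have "\<psi> (\<phi> (T (\<psi> u))) = \<psi> (\<phi> a)" by simp
    then have "T (\<psi> u) = a" using psiphi TX psiX u aX by simp
    moreover have "u = \<phi> (\<psi> u)" using phipsi u by simp
    ultimately show "u \<in> \<phi> ` (T -` A \<inter> X)" using psiX u a by (metis (no_types, lifting) IntI imageI vimageI)
  qed
qed

lemma nu_exists:
  assumes mu: "\<mu> \<in> M" and mU: "measure \<mu> U > 0"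
  shows "\<exists>\<nu>\<in>M. \<forall>A\<in>sets L. measure \<mu> (\<phi> ` A) = measure \<mu> U * measure \<nu> A"
proof -
  interpret P: prob_space \<mu> using probmu[OF mu] .
  obtain x0 where x0: "x0 \<in> X" using Xne by blast
  define \<psi>' where "\<psi>' = (\<lambda>x. if x \<in> U then \<psi> x else x0)"
  define m where "m = measure \<mu> U"
  define c where "c = 1 / m"
  define g where "g x = ennreal c * indicator U x" for x
  have Usm: "U \<in> sets \<mu>" by (rule Us[OF mu])
  have gm: "g \<in> borel_measurable \<mu>" unfolding g_def using Usm by measurable
  define D where "D = density \<mu> g"
  define \<nu> where "\<nu> = distr D L \<psi>'"
  have setsD: "sets D = sets L" unfolding D_def using setsmu[OF mu] by simp
  have spaceD: "space D = X" unfolding D_def using spacemu[OF mu] by simp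
  have \<psi>'m: "\<psi>' \<in> measurable D L"
  proof -
    have "measurable D L = measurable L L" by (rule measurable_cong_sets[OF setsD refl])
    then show ?thesis using psi'_meas[OF x0] unfolding \<psi>'_def by simp
  qed
  have setsnu: "sets \<nu> = sets L" and spacenu: "space \<nu> = X" unfolding \<nu>_def using spaceL by simp_all
  have em: "emeasure \<nu> A = ennreal c * emeasure \<mu> (\<phi> ` A)" and phis: "\<phi> ` A \<in> sets \<mu>"
    if A: "A \<in> sets L" for A
  proof -
    have AX: "A \<subseteq> X" using sets.sets_into_space[OF A] spaceL by simp
    have E: "\<psi>' -` A \<inter> X \<in> sets \<mu>"
      using measurable_sets[OF \<psi>'m A] spaceD setsD setsmu[OF mu] by simp
    have eq: "U \<inter> (\<psi>' -` A \<inter> X) = \<phi> ` A" unfolding \<psi>'_def by (rule phi_image_eq[OF AX])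
    show "\<phi> ` A \<in> sets \<mu>" using eq E Usm by (metis sets.Int)
    have "emeasure \<nu> A = emeasure D (\<psi>' -` A \<inter> X)"
      unfolding \<nu>_def using emeasure_distr[OF \<psi>'m A] spaceD by simp
    also have "\<dots> = (\<integral>\<^sup>+ x. g x * indicator (\<psi>' -` A \<inter> X) x \<partial>\<mu>)"
      unfolding D_def by (rule emeasure_density[OF gm E])
    also have "\<dots> = (\<integral>\<^sup>+ x. ennreal c * indicator (U \<inter> (\<psi>' -` A \<inter> X)) x \<partial>\<mu>)"
      unfolding g_def by (simp add: indicator_inter_arith mult.assoc)
    also have "\<dots> = ennreal c * emeasure \<mu> (U \<inter> (\<psi>' -` A \<inter> X))"
      using E Usm by (intro nn_integral_cmult_indicator) (rule sets.Int)
    finally show "emeasure \<nu> A = ennreal c * emeasure \<mu> (\<phi> ` A)" using eq by simp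
  qed
  have cm: "c * m = 1" unfolding c_def using mU m_def by simp
  have c0: "0 \<le> c" unfolding c_def using mU m_def by simp
  have nuM: "\<nu> \<in> M"
    unfolding invariant_measures_def
  proof (intro CollectI conjI ballI)
    show "sets \<nu> = sets L" by (rule setsnu)
    show "prob_space \<nu>"
    proof
      have XL: "X \<in> sets L" using XB by (simp add: sets_restrict_space_iff)
      have "emeasure \<nu> X = ennreal c * emeasure \<mu> U" using em[OF XL] phiX by simp
      also have "\<dots> = ennreal c * ennreal m" unfolding m_def by (simp add: P.emeasure_eq_measure)
      also have "\<dots> = ennreal (c * m)" using c0 by (rule ennreal_mult'[symmetric])
      also have "\<dots> = 1" using cm by simp
      finally show "emeasure \<nu> (space \<nu>) = 1" using spacenu by simp
    qed
    show "T \<in> measurable \<nu> \<nu>"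
      using meas_cont_L[OF contT TX] measurable_cong_sets[OF setsnu setsnu] by simp
    fix A assume A: "A \<in> sets \<nu>"
    then have AL: "A \<in> sets L" using setsnu by simp
    have AX: "A \<subseteq> X" using sets.sets_into_space[OF AL] spaceL by simp
    have TAL: "T -` A \<inter> X \<in> sets L"
      using measurable_sets[OF meas_cont_L[OF contT TX] AL] spaceL by simp
    have "emeasure \<nu> (T -` A \<inter> space \<nu>) = ennreal c * emeasure \<mu> (\<phi> ` (T -` A \<inter> X))"
      using em[OF TAL] spacenu by simp
    also have "\<dots> = ennreal c * emeasure \<mu> {u\<in>U. TU u \<in> \<phi> ` A}" using phi_T_eq[OF AX] by simp
    also have "\<dots> = ennreal c * emeasure \<mu> (\<phi> ` A)"
      using TU_inv[OF mu phis[OF AL]] phiU AX by (metis image_subset_iff subsetD)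
    also have "\<dots> = emeasure \<nu> A" using em[OF AL] by simp
    finally show "emeasure \<nu> (T -` A \<inter> space \<nu>) = emeasure \<nu> A" .
  qed
  have "measure \<mu> (\<phi> ` A) = measure \<mu> U * measure \<nu> A" if A: "A \<in> sets L" for A
  proof -
    have "measure \<nu> A = enn2real (ennreal c * emeasure \<mu> (\<phi> ` A))" unfolding measure_def using em[OF A] by simp
    also have "\<dots> = c * measure \<mu> (\<phi> ` A)" using c0 by (simp add: enn2real_mult P.emeasure_eq_measure)
    finally have "measure \<nu> A = c * measure \<mu> (\<phi> ` A)" .
    then have "measure \<mu> U * measure \<nu> A = (c * m) * measure \<mu> (\<phi> ` A)" unfolding m_def by simp
    then show ?thesis using cm by simp
  qed
  then show ?thesis using nuM by blast
qed

end




context sys begin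

lemma An_props: "(\<phi>^^n) ` X \<subseteq> X \<and> compact ((\<phi>^^n) ` X)"
proof (induction n)
  case 0 then show ?case using cX by simp
next
  case (Suc n)
  have eq: "(\<phi>^^Suc n) ` X = \<phi> ` ((\<phi>^^n) ` X)" by (simp add: image_comp)
  have "\<phi> ` ((\<phi>^^n) ` X) \<subseteq> U" using Suc phiU by blast
  moreover have "compact (\<phi> ` ((\<phi>^^n) ` X))"
    using compact_continuous_image[OF continuous_on_subset[OF contphi Suc[THEN conjunct1]] Suc[THEN conjunct2]] .
  ultimately show ?case using eq UX by auto
qed

lemma An_sets: "(\<phi>^^n) ` X \<in> sets L"
proof -
  have "closed ((\<phi>^^n) ` X)" using An_props compact_imp_closed by blast
  then show ?thesis using An_props[of n] XB by (simp add: sets_restrict_space_iff)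
qed

lemma estimate:
  assumes q: "0 \<le> q" "\<forall>\<mu>\<in>M. measure \<mu> U \<le> q"
  shows "\<forall>\<mu>\<in>M. measure \<mu> ((\<phi>^^n) ` X) \<le> q ^ n"
proof (induction n)
  case 0
  show ?case
  proof
    fix \<mu> assume mu: "\<mu> \<in> M"
    interpret prob_space \<mu> using probmu[OF mu] .
    show "measure \<mu> ((\<phi>^^0) ` X) \<le> q ^ 0" by (simp add: prob_le_1)
  qed
next
  case (Suc n)
  show ?case
  proof
    fix \<mu> assume mu: "\<mu> \<in> M"
    interpret prob_space \<mu> using probmu[OF mu] .
    define A where "A = (\<phi>^^n) ` X"
    have eq: "(\<phi>^^Suc n) ` X = \<phi> ` A" unfolding A_def by (simp add: image_comp)
    have AL: "A \<in> sets L" unfolding A_def by (rule An_sets)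
    show "measure \<mu> ((\<phi>^^Suc n) ` X) \<le> q ^ Suc n"
    proof (cases "measure \<mu> U = 0")
      case True
      have "\<phi> ` A \<subseteq> U" using An_props[of n] phiU unfolding A_def by blast
      then have "measure \<mu> (\<phi> ` A) \<le> measure \<mu> U" by (rule finite_measure_mono[OF _ Us[OF mu]])
      then have "measure \<mu> (\<phi> ` A) \<le> 0" using True by simp
      moreover have "0 \<le> q ^ Suc n" using q(1) by simp
      ultimately show ?thesis unfolding eq by linarith
    next
      case False
      then have pos: "measure \<mu> U > 0" using measure_nonneg[of \<mu> U] by linarith
      obtain \<nu> where nu: "\<nu> \<in> M" and rel: "\<forall>A\<in>sets L. measure \<mu> (\<phi> ` A) = measure \<mu> U * measure \<nu> A"
        using nu_exists[OF mu pos] by blast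
      have "measure \<mu> ((\<phi>^^Suc n) ` X) = measure \<mu> U * measure \<nu> A" using eq rel AL by simp
      also have "\<dots> \<le> q * q ^ n"
        using q mu Suc.IH nu unfolding A_def by (intro mult_mono) auto
      finally show ?thesis by simp
    qed
  qed
qed

end

theorem mainTheorem11:
  fixes X U :: "'a::metric_space set" and T \<phi> \<psi> :: "'a \<Rightarrow> 'a"
  assumes "minimal_cantor_system X T"
    and "clopen_in X U" and "U \<subset> X"
    and "homeomorphism X U \<phi> \<psi>"
    and "\<forall>x\<in>X. \<phi> (T x) = induced_map U T (\<phi> x)"
  shows "(\<lambda>n. SUP \<mu>\<in>invariant_measures X T. measure \<mu> ((\<phi> ^^ n) ` X)) \<longlonglongrightarrow> 0
    \<and> (\<forall>\<mu>\<in>invariant_measures X T. measure \<mu> (\<Inter>n. (\<phi> ^^ n) ` X) = 0)"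
proof -
  obtain S where hT: "homeomorphism X X T S"
    and dense: "\<forall>x\<in>X. X \<subseteq> closure ({(T ^^ n) x | n. True} \<union> {(S ^^ n) x | n. True})"
    and cs: "cantor_set X"
    using assms(1) unfolding minimal_cantor_system_def by blast
  interpret sys X U T S \<phi> \<psi>
    using cs hT dense assms(2-5) by unfold_locales
  obtain q where q: "0 \<le> q" "q < 1" "\<forall>\<mu>\<in>M. measure \<mu> U \<le> q"
    using uniform_bound by blast
  have est: "\<And>n \<mu>. \<mu> \<in> M \<Longrightarrow> measure \<mu> ((\<phi>^^n) ` X) \<le> q ^ n"
    using estimate[OF q(1) q(3)] by blast
  obtain \<nu> where "sets \<nu> = sets L \<and> prob_space \<nu> \<and> T \<in> measurable \<nu> \<nu> \<and>
      (\<forall>A\<in>sets \<nu>. emeasure \<nu> (T -` A \<inter> space \<nu>) = emeasure \<nu> A)"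
    using exists_invariant_measure[OF cX zd Xne contT TX] by blast
  then have nuM: "\<nu> \<in> M" unfolding invariant_measures_def by blast
  then have Mne: "M \<noteq> {}" by blast
  have bdd: "bdd_above ((\<lambda>\<mu>. measure \<mu> ((\<phi>^^n) ` X)) ` M)" for n
  proof (rule bdd_aboveI)
    fix y assume "y \<in> (\<lambda>\<mu>. measure \<mu> ((\<phi>^^n) ` X)) ` M"
    then obtain \<mu> where mu: "\<mu> \<in> M" "y = measure \<mu> ((\<phi>^^n) ` X)" by blast
    interpret prob_space \<mu> using probmu[OF mu(1)] .
    show "y \<le> 1" using mu(2) prob_le_1 by simp
  qed
  have up: "(SUP \<mu>\<in>M. measure \<mu> ((\<phi>^^n) ` X)) \<le> q ^ n" for n
    using Mne est by (intro cSUP_least) auto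
  have lo: "0 \<le> (SUP \<mu>\<in>M. measure \<mu> ((\<phi>^^n) ` X))" for n
    using cSUP_upper2[OF bdd nuM, of 0 n] by simp
  have qlim: "(\<lambda>n. q ^ n) \<longlonglongrightarrow> 0" by (rule LIMSEQ_realpow_zero[OF q(1,2)])
  have lim: "(\<lambda>n. SUP \<mu>\<in>M. measure \<mu> ((\<phi>^^n) ` X)) \<longlonglongrightarrow> 0"
    by (rule real_tendsto_sandwich[OF _ _ tendsto_const qlim]) (use up lo in auto)
  have int0: "measure \<mu> (\<Inter>n. (\<phi>^^n) ` X) = 0" if mu: "\<mu> \<in> M" for \<mu>
  proof -
    interpret prob_space \<mu> using probmu[OF mu] .
    have "measure \<mu> (\<Inter>n. (\<phi>^^n) ` X) \<le> q ^ n" for n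
    proof -
      have "(\<phi>^^n) ` X \<in> sets \<mu>" using An_sets setsmu[OF mu] by simp
      then have "measure \<mu> (\<Inter>n. (\<phi>^^n) ` X) \<le> measure \<mu> ((\<phi>^^n) ` X)"
        by (intro finite_measure_mono) auto
      then show ?thesis using est[OF mu, of n] by simp
    qed
    then have "measure \<mu> (\<Inter>n. (\<phi>^^n) ` X) \<le> 0"
      using LIMSEQ_le_const[OF qlim] by blast
    then show ?thesis using measure_nonneg[of \<mu>] by (simp add: order_antisym)
  qed
  show ?thesis using lim int0 by blast
qed



end
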